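(* Let $M\in\mathbb{R}^{m\times k}$ and let $P\in\mathbb{R}^{k\times k}$ be a projector along $\ker M$. Let $r:\mathbb{R}^n\to\mathbb{R}^k$ be continuous. Then there is a continuous function $g:\mathbb{R}^n\to\mathbb{R}^k$ such that for all $z\in\mathbb{R}^k$ and $y\in\mathbb{R}^n$: $M^\top Mz+P^\top r(y)=0$ if and only if $Pz=g(y)$.
   Context: A projector along $\ker M$ is a matrix $P$ with $P^2=P$ and $\ker P=\ker M$. *)

theory Defs
  imports "HOL-Analysis.Analysis"
begin

definition mat_ker :: "('a::real_normed_field) ^'k^'m \<Rightarrow> ('a^'k) set" where
  "mat_ker M = {x. M *v x = 0}"

definition projector_along_ker :: "real^'k^'k \<Rightarrow> real^'k^'m \<Rightarrow> bool" where
  "projector_along_ker P M \<longleftrightarrow> P ** P = P \<and> mat_ker P = mat_ker M"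

end

theory Submission
  imports Defs
begin

lemma tr_inner: "(transpose A *v x) \<bullet> y = x \<bullet> (A *v (y::real^'a))" for A :: "real^'a^'b"
  by (simp add: dot_lmul_matrix)

theorem corollary1:
  fixes M :: "real^'k^'m" and P :: "real^'k^'k" and r :: "real^'n \<Rightarrow> real^'k"
  assumes "projector_along_ker P M"
    and "continuous_on UNIV r"
  shows "\<exists>g :: real^'n \<Rightarrow> real^'k. continuous_on UNIV g \<and>
           (\<forall>z y. (transpose M ** M) *v z + transpose P *v r y = 0 \<longleftrightarrow> P *v z = g y)"
proof -
  define B where "B = transpose M ** M"
  have PM: "P *v x = 0 \<longleftrightarrow> M *v x = 0" for x
    using assms(1) unfolding projector_along_ker_def mat_ker_def by (simp add: set_eq_iff)
  have Bx: "B *v x = transpose M *v (M *v x)" for x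
    by (simp add: B_def matrix_vector_mul_assoc)
  have BM: "M *v x = 0" if "x \<bullet> (B *v x) = 0" for x
  proof -
    have "x \<bullet> (B *v x) = (M *v x) \<bullet> (M *v x)"
      by (simp add: Bx inner_commute[of x] dot_lmul_matrix)
    then show ?thesis using that by simp
  qed
  have ex: "\<exists>z. B *v z = transpose P *v v" for v
  proof -
    define w where "w = transpose P *v v"
    obtain a c where a: "a \<in> span (range ((*v) B))"
      and c: "\<And>u. u \<in> span (range ((*v) B)) \<Longrightarrow> orthogonal c u" and wac: "w = a + c"
      using orthogonal_subspace_decomp_exists by blast
    have "c \<bullet> (B *v c) = 0" using c[of "B *v c"] by (simp add: span_base orthogonal_def)
    then have "M *v c = 0" by (rule BM)
    then have Pc: "P *v c = 0" using PM by simp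
    have "w \<bullet> c = 0" unfolding w_def by (simp add: dot_lmul_matrix Pc)
    moreover have "a \<bullet> c = 0" using c[OF a] by (simp add: orthogonal_def inner_commute)
    ultimately have "c \<bullet> c = 0" using wac by (simp add: inner_add_left)
    then have "w = a" using wac by simp
    moreover have "subspace (range ((*v) B))"
      by (metis linear_subspace_image matrix_vector_mul_linear subspace_UNIV)
    ultimately have "w \<in> range ((*v) B)" using a by (metis span_eq_iff)
    then show ?thesis unfolding w_def by auto
  qed
  define L where "L v = P *v (SOME z. B *v z + transpose P *v v = 0)" for v
  have ex2: "\<exists>z. B *v z + transpose P *v v = 0" for v
  proof -
    obtain z where "B *v z = transpose P *v (- v)" using ex by blast
    then have "B *v z + transpose P *v v = 0" using linear_neg[OF matrix_vector_mul_linear, of "transpose P" v] by simp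
    then show ?thesis by blast
  qed
  have iff: "B *v z + transpose P *v v = 0 \<longleftrightarrow> P *v z = L v" for z v
  proof -
    define z0 where "z0 = (SOME z. B *v z + transpose P *v v = 0)"
    have z0: "B *v z0 + transpose P *v v = 0" unfolding z0_def using someI_ex[OF ex2] .
    have "B *v z + transpose P *v v = 0 \<longleftrightarrow> B *v (z - z0) = 0"
      proof -
      have "transpose P *v v = - (B *v z0)" using z0 by (simp add: eq_neg_iff_add_eq_0 add.commute)
      then show ?thesis by (simp add: matrix_vector_mult_diff_distrib)
    qed
    also have "\<dots> \<longleftrightarrow> M *v (z - z0) = 0"
      using BM[of "z - z0"] by (auto simp: Bx)
    also have "\<dots> \<longleftrightarrow> P *v (z - z0) = 0" using PM by simp
    also have "\<dots> \<longleftrightarrow> P *v z = L v"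
      unfolding L_def z0_def[symmetric] by (simp add: matrix_vector_mult_diff_distrib)
    finally show ?thesis .
  qed
  have lin: "linear L"
  proof (rule linearI)
    fix u w
    obtain zu zw where zu: "B *v zu + transpose P *v u = 0" and zw: "B *v zw + transpose P *v w = 0"
      using ex2 by blast
    have "B *v (zu + zw) + transpose P *v (u + w) = 0"
      using zu zw by (simp add: matrix_vector_right_distrib algebra_simps)
    then have "P *v (zu + zw) = L (u + w)" using iff by blast
    moreover have "P *v zu = L u" "P *v zw = L w" using iff zu zw by blast+
    ultimately show "L (u + w) = L u + L w" by (metis matrix_vector_right_distrib)
  next
    fix s :: real and u
    obtain zu where zu: "B *v zu + transpose P *v u = 0" using ex2 by blast
    have "B *v (s *\<^sub>R zu) + transpose P *v (s *\<^sub>R u) = 0"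
      proof -
      have "B *v (s *\<^sub>R zu) + transpose P *v (s *\<^sub>R u) = s *\<^sub>R (B *v zu + transpose P *v u)"
        by (simp add: matrix_vector_mult_scaleR scaleR_right_distrib)
      then show ?thesis using zu by simp
    qed
    then have "P *v (s *\<^sub>R zu) = L (s *\<^sub>R u)" using iff by blast
    moreover have "P *v zu = L u" using iff zu by blast
    ultimately show "L (s *\<^sub>R u) = s *\<^sub>R L u" by (metis matrix_vector_mult_scaleR)
  qed
  have "continuous_on UNIV (L \<circ> r)"
    by (rule continuous_on_compose[OF assms(2)])
       (rule linear_continuous_on, simp add: linear_conv_bounded_linear[symmetric] lin)
  then show ?thesis using iff unfolding B_def by (auto simp: o_def intro!: exI[of _ "L \<circ> r"])
qed

end
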